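(* Let $H$ be a graph with $n$ vertices and at least $n+1$ edges. Then $H$ contains a cycle of length at most $\frac{2n}{3}+1$.
   Context: Graphs may contain loops and parallel edges; a loop is a cycle of length 1 and two parallel edges form a cycle of length 2. *)

theory Defs
  imports Complex_Main
begin

text \<open>A finite multigraph (loops and parallel edges allowed): vertex set V, edge set E
  (edge identifiers), and an endpoint map; an edge e joins u and v if its endpoint pair
  is (u,v) or (v,u).\<close>

definition multigraph :: "'a set \<Rightarrow> 'e set \<Rightarrow> ('e \<Rightarrow> 'a \<times> 'a) \<Rightarrow> bool" where
  "multigraph V E ends \<longleftrightarrow> finite V \<and> finite E \<and>
     (\<forall>e\<in>E. fst (ends e) \<in> V \<and> snd (ends e) \<in> V)"

definition joins :: "('e \<Rightarrow> 'a \<times> 'a) \<Rightarrow> 'e \<Rightarrow> 'a \<Rightarrow> 'a \<Rightarrow> bool" where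
  "joins ends e u v \<longleftrightarrow> ends e = (u, v) \<or> ends e = (v, u)"

text \<open>For k = 1 this is a loop, for
  k = 2 a pair of parallel edges.\<close>

definition is_cycle :: "'a set \<Rightarrow> 'e set \<Rightarrow> ('e \<Rightarrow> 'a \<times> 'a) \<Rightarrow> 'a list \<Rightarrow> 'e list \<Rightarrow> bool" where
  "is_cycle V E ends vs es \<longleftrightarrow> vs \<noteq> [] \<and> length es = length vs \<and>
     distinct vs \<and> distinct es \<and> set vs \<subseteq> V \<and> set es \<subseteq> E \<and>
     (\<forall>i<length vs. joins ends (es ! i) (vs ! i) (vs ! ((i + 1) mod length vs)))"

end

theory Submission
  imports Defs
begin

fun walk :: "'e set \<Rightarrow> ('e \<Rightarrow> 'a \<times> 'a) \<Rightarrow> 'a list \<Rightarrow> 'e list \<Rightarrow> bool" where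
  "walk E ends [v] [] = True"
| "walk E ends (u # v # vs) (e # es) = (e \<in> E \<and> joins ends e u v \<and> walk E ends (v # vs) es)"
| "walk E ends _ _ = False"

lemma joins_sym: "joins ends e u v \<Longrightarrow> joins ends e v u"
  by (auto simp: joins_def)

lemma walk_iff: "walk E ends vs es \<longleftrightarrow> (length vs = Suc (length es) \<and> set es \<subseteq> E \<and>
   (\<forall>i<length es. joins ends (es!i) (vs!i) (vs!Suc i)))"
proof (induction es arbitrary: vs)
  case Nil
  then show ?case
  proof (cases vs)
    case (Cons a l) then show ?thesis by (cases l) auto
  qed simp
next
  case (Cons e es)
  show ?case
  proof (cases vs)
    case Nil then show ?thesis by simp
  next
    case (Cons u ws)
    show ?thesis
    proof (cases ws)
      case Nil then show ?thesis using Cons by simp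
    next
      case (Cons v xs)
      show ?thesis using Cons \<open>vs = u # ws\<close> Cons.IH[of ws]
        by (auto simp: All_less_Suc2)
    qed
  qed
qed

lemma walk_nonempty: "walk E ends vs es \<Longrightarrow> vs \<noteq> []"
  by (auto simp: walk_iff)

lemma walk_append: "walk E ends vs1 es1 \<Longrightarrow> walk E ends vs2 es2 \<Longrightarrow> last vs1 = hd vs2 \<Longrightarrow>
   walk E ends (vs1 @ tl vs2) (es1 @ es2)"
proof (induction E ends vs1 es1 rule: walk.induct)
  case (1 E ends v)
  then show ?case by (cases vs2) auto
next
  case (2 E ends u v vs e es)
  then show ?case by auto
qed auto

lemma walk_rev: "walk E ends vs es \<Longrightarrow> walk E ends (rev vs) (rev es)"
proof (induction E ends vs es rule: walk.induct)
  case (2 E ends u v vs e es)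
  then have "walk E ends (rev (v # vs)) (rev es)" "walk E ends [v, u] [e]"
    by (auto simp: joins_sym)
  from walk_append[OF this] show ?case by simp
qed auto

lemma walk_drop: "walk E ends vs es \<Longrightarrow> j < length vs \<Longrightarrow> walk E ends (drop j vs) (drop j es)"
  unfolding walk_iff by (auto dest: in_set_dropD)

lemma walk_take: "walk E ends vs es \<Longrightarrow> j < length vs \<Longrightarrow> walk E ends (take (Suc j) vs) (take j es)"
  unfolding walk_iff by (auto dest: in_set_takeD)

lemma walk_edge_ends: "walk E ends vs es \<Longrightarrow> d \<in> set es \<Longrightarrow> fst (ends d) \<in> set vs \<and> snd (ends d) \<in> set vs"
  by (induction E ends vs es rule: walk.induct) (auto simp: joins_def)

lemma walk_distinct: "walk E ends vs es \<Longrightarrow> distinct vs \<Longrightarrow> distinct es"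
proof (induction E ends vs es rule: walk.induct)
  case (2 E ends u v vs e es)
  have "e \<notin> set es"
  proof
    assume "e \<in> set es"
    have w: "walk E ends (v # vs) es" using 2 by simp
    have u: "u = fst (ends e) \<or> u = snd (ends e)" using 2(2) by (auto simp: joins_def)
    have "u \<notin> set (v # vs)" using 2(3) by auto
    with walk_edge_ends[OF w \<open>e \<in> set es\<close>] u show False by auto
  qed
  with 2 show ?case by auto
qed auto

lemma walk_subset: "walk E ends vs es \<Longrightarrow> set es \<subseteq> E' \<Longrightarrow> walk E' ends vs es"
  by (induction E ends vs es rule: walk.induct) auto

lemma path_exists: "walk E ends vs es \<Longrightarrow> \<exists>ps qs. walk E ends ps qs \<and> distinct ps \<and> hd ps = hd vs \<and>
   last ps = last vs \<and> set ps \<subseteq> set vs \<and> set qs \<subseteq> set es \<and> length qs \<le> length es"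
proof (induction E ends vs es rule: walk.induct)
  case (1 E ends v)
  then show ?case by (intro exI[of _ "[v]"] exI[of _ "[]"]) auto
next
  case (2 E ends u v vs e es)
  then obtain ps qs where P: "walk E ends ps qs" "distinct ps" "hd ps = v"
   "last ps = last (v # vs)" "set ps \<subseteq> set (v#vs)" "set qs \<subseteq> set es" "length qs \<le> length es" by auto
  have ne: "ps \<noteq> []" using P(1) walk_nonempty by blast
  show ?case
  proof (cases "u \<in> set ps")
    case True
    then obtain j where j: "j < length ps" "ps ! j = u" by (auto simp: in_set_conv_nth)
    have lq: "length ps = Suc (length qs)" using P(1) by (simp add: walk_iff)
    show ?thesis
      apply (intro exI[of _ "drop j ps"] exI[of _ "drop j qs"])
      using walk_drop[OF P(1) j(1)] P j lq by (auto simp: hd_drop_conv_nth dest: in_set_dropD)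
  next
    case False
    have "ps = v # tl ps" using ne P(3) by (cases ps) auto
    then have "walk E ends (u # ps) (e # qs)" using P(1) 2(2) by (metis walk.simps(2))
    then show ?thesis
      apply (intro exI[of _ "u # ps"] exI[of _ "e # qs"])
      using P False ne by auto
  qed
qed auto

lemma cycle_from_walk:
  assumes w: "walk E ends vs es" and V: "set vs \<subseteq> V" and e: "e \<in> E" "e \<notin> set es"
    and j: "joins ends e (last vs) (hd vs)"
  shows "\<exists>cs fs. is_cycle V E ends cs fs \<and> length cs \<le> length es + 1"
proof -
  obtain ps qs where P: "walk E ends ps qs" "distinct ps" "hd ps = hd vs"
   "last ps = last vs" "set ps \<subseteq> set vs" "set qs \<subseteq> set es" "length qs \<le> length es"
    using path_exists[OF w] by blast
  have lq: "length ps = Suc (length qs)" and qE: "set qs \<subseteq> E"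
    and J: "\<forall>i<length qs. joins ends (qs!i) (ps!i) (ps!Suc i)" using P(1) by (auto simp: walk_iff)
  have dq: "distinct qs" using walk_distinct[OF P(1,2)] .
  have "is_cycle V E ends ps (qs @ [e])"
    unfolding is_cycle_def
  proof (intro conjI allI impI)
    show "ps \<noteq> []" using lq by auto
    show "length (qs @ [e]) = length ps" using lq by simp
    show "distinct ps" by fact
    show "distinct (qs @ [e])" using dq P(6) e(2) by auto
    show "set ps \<subseteq> V" using P(5) V by auto
    show "set (qs @ [e]) \<subseteq> E" using qE e(1) by auto
    fix i assume i: "i < length ps"
    show "joins ends ((qs @ [e]) ! i) (ps ! i) (ps ! ((i + 1) mod length ps))"
    proof (cases "i < length qs")
      case True
      then show ?thesis using J lq by (simp add: nth_append)
    next
      case False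
      then have ii: "i = length qs" using i lq by simp
      have "ps ! i = last ps" using ii lq by (subst last_conv_nth) auto
      moreover have "ps ! ((i + 1) mod length ps) = hd ps" using ii lq by (subst hd_conv_nth) auto
      ultimately show ?thesis using j P(3,4) ii by (simp add: nth_append)
    qed
  qed
  then show ?thesis using lq P(7) by auto
qed

lemma is_cycle_mono: "is_cycle V E ends cs fs \<Longrightarrow> V \<subseteq> V' \<Longrightarrow> E \<subseteq> E' \<Longrightarrow> is_cycle V' E' ends cs fs"
  unfolding is_cycle_def by auto

lemma cycle_arc:
  assumes c: "is_cycle V E ends cs fs" and i: "i < length cs"
  shows "walk E ends (map (\<lambda>j. cs!((i+j) mod length cs)) [0..<Suc t]) (map (\<lambda>j. fs!((i+j) mod length cs)) [0..<t])"
    and "set (map (\<lambda>j. fs!((i+j) mod length cs)) [0..<t]) \<subseteq> set fs"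
    and "set (map (\<lambda>j. cs!((i+j) mod length cs)) [0..<Suc t]) \<subseteq> set cs"
proof -
  let ?k = "length cs"
  have k: "?k > 0" using i by linarith
  have lf: "length fs = ?k" using c by (simp add: is_cycle_def)
  show s: "set (map (\<lambda>j. fs!((i+j) mod length cs)) [0..<t]) \<subseteq> set fs"
    using k lf by auto
  show "set (map (\<lambda>j. cs!((i+j) mod length cs)) [0..<Suc t]) \<subseteq> set cs"
    using k by auto
  have fE: "set fs \<subseteq> E" using c by (simp add: is_cycle_def)
  have J: "\<And>m. m < ?k \<Longrightarrow> joins ends (fs!m) (cs!m) (cs!((m+1) mod ?k))" using c by (simp add: is_cycle_def)
  show "walk E ends (map (\<lambda>j. cs!((i+j) mod length cs)) [0..<Suc t]) (map (\<lambda>j. fs!((i+j) mod length cs)) [0..<t])"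
    unfolding walk_iff
  proof (intro conjI allI impI)
    show "set (map (\<lambda>j. fs!((i+j) mod length cs)) [0..<t]) \<subseteq> E" using s fE by auto
    fix m assume m: "m < length (map (\<lambda>j. fs ! ((i + j) mod length cs)) [0..<t])"
    have "joins ends (fs!((i+m) mod ?k)) (cs!((i+m) mod ?k)) (cs!(((i+m) mod ?k + 1) mod ?k))"
      using J k by simp
    moreover have "((i+m) mod ?k + 1) mod ?k = (i + Suc m) mod ?k" by (simp add: mod_Suc_eq)
    ultimately show "joins ends (map (\<lambda>j. fs ! ((i + j) mod length cs)) [0..<t] ! m)
          (map (\<lambda>j. cs ! ((i + j) mod length cs)) [0..<Suc t] ! m)
          (map (\<lambda>j. cs ! ((i + j) mod length cs)) [0..<Suc t] ! Suc m)"
      using m by (simp del: upt_Suc)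
  qed simp
qed

lemma cycle_rotate:
  assumes c: "is_cycle V E ends cs fs"
  shows "is_cycle V E ends (rotate r cs) (rotate r fs)"
proof -
  let ?k = "length cs"
  have lf: "length fs = ?k" and k: "?k > 0" using c by (auto simp: is_cycle_def)
  have J: "\<And>m. m < ?k \<Longrightarrow> joins ends (fs!m) (cs!m) (cs!((m+1) mod ?k))" using c by (simp add: is_cycle_def)
  show ?thesis
    unfolding is_cycle_def
  proof (intro conjI allI impI)
    fix i assume i: "i < length (rotate r cs)"
    have "joins ends (fs!((r+i) mod ?k)) (cs!((r+i) mod ?k)) (cs!(((r+i) mod ?k + 1) mod ?k))"
      using J k by simp
    moreover have "((r+i) mod ?k + 1) mod ?k = (r + (i+1) mod ?k) mod ?k"
      by (metis add_Suc_right mod_Suc_eq mod_add_right_eq Suc_eq_plus1)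
    ultimately show "joins ends (rotate r fs ! i) (rotate r cs ! i) (rotate r cs ! ((i + 1) mod length (rotate r cs)))"
      using i k lf by (simp add: nth_rotate)
  qed (use c in \<open>auto simp: is_cycle_def\<close>)
qed

lemma path_long:
  assumes mg: "multigraph V E ends" and V0: "V \<noteq> {}"
    and noloop: "\<forall>e\<in>E. fst (ends e) \<noteq> snd (ends e)"
    and deg: "\<forall>v\<in>V. 2 \<le> card {e\<in>E. fst (ends e) = v \<or> snd (ends e) = v}"
    and nocyc: "\<not> (\<exists>cs fs. is_cycle V E ends cs fs)"
  shows "\<exists>ps qs. walk E ends ps qs \<and> distinct ps \<and> set ps \<subseteq> V \<and> length ps = Suc m"
proof (induction m)
  case 0
  then obtain v where "v \<in> V" using V0 by auto
  then show ?case by (intro exI[of _ "[v]"] exI[of _ "[]"]) auto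
next
  case (Suc m)
  then obtain ps qs where P: "walk E ends ps qs" "distinct ps" "set ps \<subseteq> V" "length ps = Suc m" by auto
  have lq: "length ps = Suc (length qs)" and qE: "set qs \<subseteq> E"
    and J: "\<forall>i<length qs. joins ends (qs!i) (ps!i) (ps!Suc i)" using P(1) by (auto simp: walk_iff)
  define x where "x = last ps"
  have xl: "x = ps ! length qs" using lq unfolding x_def by (subst last_conv_nth) auto
  have pne: "ps \<noteq> []" using lq by auto
  have xV: "x \<in> V" using P(3) last_in_set[OF pne] unfolding x_def by auto
  define I where "I = {e\<in>E. fst (ends e) = x \<or> snd (ends e) = x}"
  have fE: "finite E" using mg by (simp add: multigraph_def)
  have cI: "2 \<le> card I" unfolding I_def using bspec[OF deg xV] .
  have sub: "I \<inter> set qs \<subseteq> {qs ! (length qs - 1)}"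
  proof
    fix e assume e: "e \<in> I \<inter> set qs"
    then obtain i where i: "i < length qs" "qs ! i = e" by (auto simp: in_set_conv_nth)
    have "joins ends e (ps!i) (ps!Suc i)" using J i by auto
    then have "x = ps!i \<or> x = ps ! Suc i" using e unfolding I_def joins_def by auto
    moreover have "ps!i = ps!length qs \<longleftrightarrow> i = length qs"
      using nth_eq_iff_index_eq[OF P(2), of i "length qs"] lq i by simp
    moreover have "ps!Suc i = ps!length qs \<longleftrightarrow> Suc i = length qs"
      using nth_eq_iff_index_eq[OF P(2), of "Suc i" "length qs"] lq i by simp
    ultimately have "length qs = i \<or> length qs = Suc i" using xl by metis
    then have "i = length qs - 1" using i by auto
    then show "e \<in> {qs ! (length qs - 1)}" using i by auto
  qed
  have "card (I \<inter> set qs) \<le> card {qs ! (length qs - 1)}"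
    by (rule card_mono[OF _ sub]) simp
  then have "card (I \<inter> set qs) \<le> 1" by simp
  moreover have "finite I" using fE unfolding I_def by auto
  ultimately have "card (I - set qs) \<ge> 1" using cI card_Diff_subset_Int[of I "set qs"] by auto
  then have "I - set qs \<noteq> {}" by (intro notI) simp
  then obtain e where e: "e \<in> I" "e \<notin> set qs" by auto
  define y where "y = (if fst (ends e) = x then snd (ends e) else fst (ends e))"
  have eE: "e \<in> E" using e unfolding I_def by auto
  have jxy: "joins ends e x y" using e unfolding I_def y_def joins_def by (cases "ends e") auto
  have yx: "y \<noteq> x" using e noloop unfolding I_def y_def by auto
  have yV: "y \<in> V" using eE mg unfolding y_def multigraph_def by auto
  show ?case
  proof (cases "y \<in> set ps")
    case True
    then obtain j where j: "j < length ps" "ps ! j = y" by (auto simp: in_set_conv_nth)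
    have w: "walk E ends (drop j ps) (drop j qs)" using walk_drop[OF P(1) j(1)] .
    have h: "hd (drop j ps) = y" using j by (simp add: hd_drop_conv_nth)
    have l: "last (drop j ps) = x" using j unfolding x_def by simp
    have en: "e \<notin> set (drop j qs)" using e(2) by (auto dest: in_set_dropD)
    have sV: "set (drop j ps) \<subseteq> V" using P(3) by (auto dest: in_set_dropD)
    have jj: "joins ends e (last (drop j ps)) (hd (drop j ps))" using jxy h l by simp
    have "\<exists>cs fs. is_cycle V E ends cs fs"
      using cycle_from_walk[OF w sV eE en jj] by blast
    then show ?thesis using nocyc by blast
  next
    case False
    have "walk E ends [x, y] [e]" using eE jxy by simp
    from walk_append[OF P(1) this] have "walk E ends (ps @ [y]) (qs @ [e])" unfolding x_def by simp
    then show ?thesis using False P yV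
      by (intro exI[of _ "ps @ [y]"] exI[of _ "qs @ [e]"]) auto
  qed
qed

lemma cycle_exists:
  "multigraph V E ends \<Longrightarrow> E \<noteq> {} \<Longrightarrow> card V \<le> card E \<Longrightarrow> \<exists>cs fs. is_cycle V E ends cs fs"
proof (induction "card V" arbitrary: V E rule: less_induct)
  case less
  note mg = less.prems(1)
  have fV: "finite V" and fE: "finite E" and ep: "\<forall>e\<in>E. fst (ends e) \<in> V \<and> snd (ends e) \<in> V"
    using mg by (auto simp: multigraph_def)
  obtain e0 where e0: "e0 \<in> E" using less.prems(2) by auto
  show ?case
  proof (cases "\<exists>e\<in>E. fst (ends e) = snd (ends e)")
    case True
    then obtain e where e: "e \<in> E" "fst (ends e) = snd (ends e)" by auto
    have "is_cycle V E ends [fst (ends e)] [e]"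
      using e ep unfolding is_cycle_def joins_def by (cases "ends e") auto
    then show ?thesis by blast
  next
    case noloop: False
    show ?thesis
    proof (cases "\<exists>v\<in>V. card {e\<in>E. fst (ends e) = v \<or> snd (ends e) = v} \<le> 1")
      case True
      then obtain v where v: "v \<in> V" "card {e\<in>E. fst (ends e) = v \<or> snd (ends e) = v} \<le> 1" by auto
      define I where "I = {e\<in>E. fst (ends e) = v \<or> snd (ends e) = v}"
      have fI: "finite I" using fE unfolding I_def by auto
      have IE: "I \<subseteq> E" unfolding I_def by auto
      have cE': "card (E - I) = card E - card I" using card_Diff_subset[OF fI IE] .
      have cV': "card (V - {v}) = card V - 1" using v fV by simp
      have cV: "card V \<ge> 1" using v fV by (metis One_nat_def Suc_leI card_gt_0_iff empty_iff)
      have "E - I \<noteq> {}"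
      proof
        assume "E - I = {}"
        then have "E \<subseteq> I" by auto
        then have "card E \<le> card I" using card_mono[OF fI] by blast
        then have "card E \<le> 1" using v(2) unfolding I_def by linarith
        moreover have "card V \<ge> 2"
        proof -
          have "{fst (ends e0), snd (ends e0)} \<subseteq> V" using ep e0 by auto
          moreover have "card {fst (ends e0), snd (ends e0)} = 2" using noloop e0 by auto
          ultimately show ?thesis using card_mono[OF fV, of "{fst (ends e0), snd (ends e0)}"] by linarith
        qed
        ultimately show False using less.prems(3) by linarith
      qed
      moreover have "multigraph (V - {v}) (E - I) ends"
        using mg unfolding multigraph_def I_def by auto
      moreover have "card (V - {v}) \<le> card (E - I)" using cE' cV' less.prems(3) v(2) cV
        unfolding I_def by linarith
      moreover have "card (V - {v}) < card V" using cV' cV by linarith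
      ultimately obtain cs fs where "is_cycle (V - {v}) (E - I) ends cs fs"
        using less.hyps by blast
      then have "is_cycle V E ends cs fs" by (rule is_cycle_mono) auto
      then show ?thesis by blast
    next
      case False
      show ?thesis
      proof (rule ccontr)
        assume nc: "\<not> (\<exists>cs fs. is_cycle V E ends cs fs)"
        have V0: "V \<noteq> {}" using ep e0 by auto
        obtain ps qs where P: "walk E ends ps qs" "distinct ps" "set ps \<subseteq> V" "length ps = Suc (card V)"
        proof -
          have nl: "\<forall>e\<in>E. fst (ends e) \<noteq> snd (ends e)" using noloop by blast
          have dg: "\<forall>v\<in>V. 2 \<le> card {e\<in>E. fst (ends e) = v \<or> snd (ends e) = v}" using False by auto
          show ?thesis using path_long[OF mg V0 nl dg nc, of "card V"] that by blast
        qed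
        have "length ps = card (set ps)" using P(2) by (simp add: distinct_card)
        also have "\<dots> \<le> card V" using card_mono[OF fV P(3)] .
        finally show False using P(4) by simp
      qed
    qed
  qed
qed

lemma in_tl_D: "x \<in> set (tl xs) \<Longrightarrow> x \<in> set xs"
  by (cases xs) auto

lemma last_append_tl: "xs \<noteq> [] \<Longrightarrow> ys \<noteq> [] \<Longrightarrow> last xs = hd ys \<Longrightarrow> last (xs @ tl ys) = last ys"
  by (cases ys) auto

lemma distinct_nth_notin_take: "distinct xs \<Longrightarrow> i < length xs \<Longrightarrow> xs ! i \<notin> set (take i xs)"
proof
  assume d: "distinct xs" and i: "i < length xs" and m: "xs ! i \<in> set (take i xs)"
  then obtain j where j: "j < length (take i xs)" "take i xs ! j = xs ! i" by (auto simp: in_set_conv_nth)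
  then have "xs ! j = xs ! i" "j < i" by auto
  then show False using nth_eq_iff_index_eq[OF d, of j i] i by simp
qed

lemma caseB:
  assumes C: "is_cycle V E ends cs fs"
    and gmin: "\<And>ds hs. is_cycle V E ends ds hs \<Longrightarrow> length cs \<le> length ds"
    and a0: "a0 \<in> set cs"
    and fdef: "\<And>z. f z = (if z \<in> set cs then a0 else z)"
    and edef: "\<And>e. ends' e = (f (fst (ends e)), f (snd (ends e)))"
    and C': "is_cycle V' (E - set fs) ends' cs' fs'"
    and V': "V' \<subseteq> insert a0 V"
    and c0: "cs' ! 0 = a0"
  shows "length cs \<le> 2 * length cs'"
proof -
  define k where "k = length cs'"
  define g where "g = length cs"
  have k0: "k > 0" and lf': "length fs' = k" and dcs': "distinct cs'" and dfs': "distinct fs'"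
    and scs': "set cs' \<subseteq> V'" and sfs': "set fs' \<subseteq> E - set fs"
    and J': "\<And>i. i < k \<Longrightarrow> joins ends' (fs'!i) (cs'!i) (cs'!((i+1) mod k))"
    using C' unfolding is_cycle_def k_def by auto
  have g0: "g > 0" and lf: "length fs = g" and sV: "set cs \<subseteq> V" and sE: "set fs \<subseteq> E"
    using C unfolding is_cycle_def g_def by auto
  have lift: "\<exists>x0 y0. joins ends e x0 y0 \<and> f x0 = x \<and> f y0 = y" if "joins ends' e x y" for e x y
    using that unfolding joins_def edef by (cases "ends e") auto
  have "\<forall>i. \<exists>x0 y0. i < k \<longrightarrow> joins ends (fs'!i) x0 y0 \<and> f x0 = cs'!i \<and> f y0 = cs'!((i+1) mod k)"
    using lift J' by blast
  then obtain L R where LR: "\<And>i. i < k \<Longrightarrow> joins ends (fs'!i) (L i) (R i) \<and> f (L i) = cs'!i \<and> f (R i) = cs'!((i+1) mod k)"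
    by metis
  have fnon: "z = x" if "f z = x" "x \<noteq> a0" for z x using that fdef by (auto split: if_splits)
  have fa0: "z \<in> set cs" if "f z = a0" for z using that fdef a0 by (auto split: if_splits)
  have nz: "cs'!j \<noteq> a0" if "0 < j" "j < k" for j
    using that c0 nth_eq_iff_index_eq[OF dcs', of j 0] k_def k0 by auto
  define w where "w j = (if j = 0 then L 0 else if j = k then R (k-1) else cs'!j)" for j
  define W where "W = map w [0..<Suc k]"
  have Lw: "L i = w i" if "i < k" for i
  proof (cases "i = 0")
    case True then show ?thesis by (simp add: w_def)
  next
    case False
    then have "f (L i) = cs'!i" "cs'!i \<noteq> a0" using LR[OF that] nz[of i] that by auto
    then have "L i = cs'!i" by (rule fnon)
    then show ?thesis using False that by (simp add: w_def)
  qed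
  have Rw: "R i = w (Suc i)" if "i < k" for i
  proof (cases "Suc i = k")
    case True
    then have "i = k - 1" by simp
    then show ?thesis using True by (simp add: w_def)
  next
    case False
    then have si: "Suc i < k" using that by simp
    then have "f (R i) = cs'!(Suc i)" using LR[OF that] by simp
    moreover have "cs'!(Suc i) \<noteq> a0" using nz[of "Suc i"] si by simp
    ultimately have "R i = cs'!(Suc i)" by (rule fnon)
    then show ?thesis using False by (simp add: w_def)
  qed
  have Jw: "joins ends (fs'!i) (w i) (w (Suc i))" if "i < k" for i
    using LR[OF that] Lw[OF that] Rw[OF that] by simp
  have fsE: "set fs' \<subseteq> E" using sfs' by auto
  have walkW: "walk E ends W fs'"
    unfolding walk_iff W_def using lf' fsE Jw by (auto simp del: upt_Suc)
  define a where "a = w 0"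
  define b where "b = w k"
  have aS: "a \<in> set cs" using LR[OF k0] c0 fa0 unfolding a_def w_def by simp
  have bS: "b \<in> set cs"
  proof -
    have "f (R (k-1)) = cs'!((k - 1 + 1) mod k)" using LR[of "k-1"] k0 by simp
    also have "\<dots> = a0" using k0 c0 by simp
    finally show ?thesis using fa0 k0 unfolding b_def w_def by simp
  qed
  have wV: "w j \<in> V" if jk: "j \<le> k" for j
  proof -
    consider "j = 0" | "j = k" | "0 < j" "j < k" using jk by linarith
    then show ?thesis
    proof cases
      case 1 then show ?thesis using aS sV unfolding a_def by auto
    next
      case 2 then show ?thesis using bS sV unfolding b_def by auto
    next
      case 3
      then have "cs'!j \<in> V'" using scs' k_def by auto
      then have "cs'!j \<in> V" using V' a0 sV by auto
      then show ?thesis using 3 by (simp add: w_def)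
    qed
  qed
  have WV: "set W \<subseteq> V" unfolding W_def using wV by auto
  have lW: "length W = Suc k" unfolding W_def by simp
  have Wne: "W \<noteq> []" using lW by (cases W) auto
  have hW: "hd W = a" unfolding W_def a_def by (simp del: upt_Suc add: hd_map)
  have lastW: "last W = b" unfolding W_def b_def by (simp del: upt_Suc add: last_map)
  have Wn: "W ! j = w j" if "j \<le> k" for j unfolding W_def using that by (simp del: upt_Suc)
  obtain ia where ia: "ia < g" "cs ! ia = a" using aS unfolding g_def by (auto simp: in_set_conv_nth)
  obtain ib where ib: "ib < g" "cs ! ib = b" using bS unfolding g_def by (auto simp: in_set_conv_nth)
  define t1 where "t1 = (if ib \<le> ia then ia - ib else ia + g - ib)"
  define t2 where "t2 = (if ia \<le> ib then ib - ia else ib + g - ia)"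
  have t12: "t1 + t2 \<le> g" unfolding t1_def t2_def using ia ib by auto
  have m1: "(ib + t1) mod g = ia" unfolding t1_def using ia ib by auto
  have m2: "(ia + t2) mod g = ib" unfolding t2_def using ia ib by auto
  define A1 where "A1 = map (\<lambda>j. cs!((ib+j) mod g)) [0..<Suc t1]"
  define B1 where "B1 = map (\<lambda>j. fs!((ib+j) mod g)) [0..<t1]"
  have arc1: "walk E ends A1 B1" "set B1 \<subseteq> set fs" "set A1 \<subseteq> set cs"
    using cycle_arc[OF C, of ib t1] ib unfolding A1_def B1_def g_def by auto
  have hA1: "hd A1 = b" unfolding A1_def using ib by (simp del: upt_Suc add: hd_map)
  have lA1: "last A1 = a" unfolding A1_def using ia m1 by (simp del: upt_Suc add: last_map)
  have wd1: "walk E ends (drop 1 W) (drop 1 fs')" using walk_drop[OF walkW, of 1] lW k0 by simp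
  have dWne: "drop 1 W \<noteq> []" using lW k0 by simp
  have ldW: "last (drop 1 W) = b" using lastW lW k0 by simp
  have A1ne: "A1 \<noteq> []" unfolding A1_def by simp
  have w1: "walk E ends (drop 1 W @ tl A1) (drop 1 fs' @ B1)"
    using walk_append[OF wd1 arc1(1)] ldW hA1 by simp
  have e1E: "fs'!0 \<in> E" using fsE k0 lf' by auto
  have "fs'!0 \<in> set fs'" using k0 lf' nth_mem[of 0 fs'] by simp
  then have e1nF: "fs'!0 \<notin> set fs" using sfs' by blast
  have e1n: "fs'!0 \<notin> set (drop 1 fs' @ B1)"
  proof -
    have "fs' = fs'!0 # drop 1 fs'" using k0 lf' by (cases fs') auto
    then have "fs'!0 \<notin> set (drop 1 fs')" using dfs' by (metis distinct.simps(2))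
    then show ?thesis using arc1(2) e1nF by auto
  qed
  have sw1: "set (drop 1 W @ tl A1) \<subseteq> V"
    using WV arc1(3) sV by (auto dest: in_set_dropD in_tl_D)
  have j1: "joins ends (fs'!0) (last (drop 1 W @ tl A1)) (hd (drop 1 W @ tl A1))"
  proof -
    have "last (drop 1 W @ tl A1) = a" using last_append_tl[OF dWne A1ne] ldW hA1 lA1 by simp
    moreover have "hd (drop 1 W @ tl A1) = w 1" using dWne Wn[of 1] lW k0 by (simp add: hd_drop_conv_nth)
    ultimately show ?thesis using Jw[OF k0] joins_sym unfolding a_def by simp
  qed
  obtain d1 h1 where c1: "is_cycle V E ends d1 h1" and l1: "length d1 \<le> length (drop 1 fs' @ B1) + 1"
    using cycle_from_walk[OF w1 sw1 e1E e1n j1] by blast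
  moreover have "length (drop 1 fs' @ B1) = k - 1 + t1" using lf' k0 unfolding B1_def by simp
  ultimately have g1: "g \<le> k + t1" using gmin[OF c1] k0 unfolding g_def by linarith
  define A2 where "A2 = map (\<lambda>j. cs!((ia+j) mod g)) [0..<Suc t2]"
  define B2 where "B2 = map (\<lambda>j. fs!((ia+j) mod g)) [0..<t2]"
  have arc2: "walk E ends A2 B2" "set B2 \<subseteq> set fs" "set A2 \<subseteq> set cs"
    using cycle_arc[OF C, of ia t2] ia unfolding A2_def B2_def g_def by auto
  have hA2: "hd A2 = a" unfolding A2_def using ia by (simp del: upt_Suc add: hd_map)
  have lA2: "last A2 = b" unfolding A2_def using ib m2 by (simp del: upt_Suc add: last_map)
  have wt: "walk E ends (take (Suc (k-1)) W) (take (k-1) fs')" using walk_take[OF walkW, of "k-1"] lW by simp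
  have wt2: "walk E ends (rev (take k W)) (rev (take (k-1) fs'))" using walk_rev[OF wt] k0 by simp
  have tWne: "rev (take k W) \<noteq> []" using Wne k0 by simp
  have ltW: "last (rev (take k W)) = a" using hW lW k0 Wne by (simp add: last_rev hd_take)
  have htW: "hd (rev (take k W)) = w (k-1)"
  proof -
    have ne: "take k W \<noteq> []" using Wne k0 by simp
    have "hd (rev (take k W)) = last (take k W)" by (simp add: hd_rev)
    also have "\<dots> = take k W ! (length (take k W) - 1)" using ne by (rule last_conv_nth)
    also have "\<dots> = W ! (k-1)" using lW k0 by simp
    finally show ?thesis using Wn[of "k-1"] by simp
  qed
  have A2ne: "A2 \<noteq> []" unfolding A2_def by simp
  have w2: "walk E ends (rev (take k W) @ tl A2) (rev (take (k-1) fs') @ B2)"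
    using walk_append[OF wt2 arc2(1)] ltW hA2 by simp
  have e2E: "fs'!(k-1) \<in> E" using fsE k0 lf' by auto
  have "fs'!(k-1) \<in> set fs'" using k0 lf' nth_mem[of "k-1" fs'] by simp
  then have e2nF: "fs'!(k-1) \<notin> set fs" using sfs' by blast
  have e2n: "fs'!(k-1) \<notin> set (rev (take (k-1) fs') @ B2)"
    using distinct_nth_notin_take[OF dfs', of "k-1"] k0 lf' arc2(2) e2nF by auto
  have sw2: "set (rev (take k W) @ tl A2) \<subseteq> V"
    using WV arc2(3) sV by (auto dest: in_set_takeD in_tl_D)
  have j2: "joins ends (fs'!(k-1)) (last (rev (take k W) @ tl A2)) (hd (rev (take k W) @ tl A2))"
  proof -
    have "last (rev (take k W) @ tl A2) = b" using last_append_tl[OF tWne A2ne] ltW hA2 lA2 by simp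
    moreover have "hd (rev (take k W) @ tl A2) = w (k-1)" using tWne htW by simp
    ultimately show ?thesis using Jw[of "k-1"] k0 joins_sym unfolding b_def by simp
  qed
  obtain d2 h2 where c2: "is_cycle V E ends d2 h2" and l2: "length d2 \<le> length (rev (take (k-1) fs') @ B2) + 1"
    using cycle_from_walk[OF w2 sw2 e2E e2n j2] by blast
  moreover have "length (rev (take (k-1) fs') @ B2) = k - 1 + t2" using lf' k0 unfolding B2_def by simp
  ultimately have g2: "g \<le> k + t2" using gmin[OF c2] k0 unfolding g_def by linarith
  from g1 g2 t12 show ?thesis unfolding g_def[symmetric] k_def[symmetric] by linarith
qed

theorem lemma3p2:
  fixes V :: "'a set" and E :: "'e set" and ends :: "'e \<Rightarrow> 'a \<times> 'a"
  assumes "multigraph V E ends"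
    and "card E \<ge> card V + 1"
  shows "\<exists>vs es. is_cycle V E ends vs es \<and>
           real (length vs) \<le> 2 * real (card V) / 3 + 1"
proof -
  note mg = assms(1)
  have fV: "finite V" and fE: "finite E" and ep: "\<forall>e\<in>E. fst (ends e) \<in> V \<and> snd (ends e) \<in> V"
    using mg by (auto simp: multigraph_def)
  have E0: "E \<noteq> {}" using assms(2) by auto
  obtain cs0 fs0 where c0: "is_cycle V E ends cs0 fs0"
    using cycle_exists[OF mg E0] assms(2) by fastforce
  define P where "P k = (\<exists>cs fs. is_cycle V E ends cs fs \<and> length cs = k)" for k
  define g where "g = (LEAST k. P k)"
  have "P g" unfolding g_def by (rule LeastI[of P "length cs0"]) (use c0 P_def in auto)
  then obtain cs fs where C: "is_cycle V E ends cs fs" and lg: "length cs = g" unfolding P_def by auto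
  have gmin: "length cs \<le> length ds" if "is_cycle V E ends ds hs" for ds hs
    unfolding lg g_def by (rule Least_le) (use that P_def in auto)
  have csne: "cs \<noteq> []" and lf: "length fs = g" and dcs: "distinct cs" and dfs: "distinct fs"
    and sV: "set cs \<subseteq> V" and sE: "set fs \<subseteq> E"
    using C lg unfolding is_cycle_def by auto
  define n where "n = card V"
  define S where "S = set cs"
  have cS: "card S = g" unfolding S_def using dcs lg by (simp add: distinct_card)
  have cF: "card (set fs) = g" using dfs lf by (simp add: distinct_card)
  have gn: "g \<le> n" unfolding n_def using card_mono[OF fV sV] cS S_def by simp
  define a0 where "a0 = cs ! 0"
  have a0S: "a0 \<in> set cs" unfolding a0_def using csne by simp
  define f where "f z = (if z \<in> set cs then a0 else z)" for z
  define ends' where "ends' e = (f (fst (ends e)), f (snd (ends e)))" for e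
  define V' where "V' = insert a0 (V - S)"
  define E' where "E' = E - set fs"
  have cVS: "card (V - S) = n - g" unfolding n_def using card_Diff_subset[of S V] sV cS fV S_def
    by (simp add: finite_subset)
  have cV': "card V' = n - g + 1" unfolding V'_def using cVS a0S fV S_def by simp
  have cE': "card E' = card E - g" unfolding E'_def using card_Diff_subset[OF _ sE] cF by simp
  have E'ne: "E' \<noteq> {}" using cE' assms(2) gn n_def by auto
  have mg': "multigraph V' E' ends'"
    unfolding multigraph_def V'_def E'_def ends'_def f_def S_def using fV fE ep by auto
  have "card V' \<le> card E'" using cV' cE' assms(2) n_def gn by linarith
  then obtain cs' fs' where C': "is_cycle V' E' ends' cs' fs'"
    using cycle_exists[OF mg' E'ne] by blast
  have dcs': "distinct cs'" and scs': "set cs' \<subseteq> V'" using C' unfolding is_cycle_def by auto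
  have fV': "finite V'" unfolding V'_def using fV by simp
  have kle: "length cs' \<le> n - g + 1"
    using card_mono[OF fV' scs'] distinct_card[OF dcs'] cV' by simp
  have key: "3 * g \<le> 2 * n + 3"
  proof (cases "a0 \<in> set cs'")
    case False
    have "is_cycle V E ends cs' fs'"
      unfolding is_cycle_def
    proof (intro conjI allI impI)
      show "cs' \<noteq> []" "length fs' = length cs'" "distinct cs'" "distinct fs'"
        using C' unfolding is_cycle_def by auto
      show "set cs' \<subseteq> V" using scs' False unfolding V'_def by auto
      show "set fs' \<subseteq> E" using C' unfolding is_cycle_def E'_def by auto
      fix i assume i: "i < length cs'"
      have j: "joins ends' (fs'!i) (cs'!i) (cs'!((i+1) mod length cs'))"
        using C' i unfolding is_cycle_def by auto
      have "(i+1) mod length cs' < length cs'" using i by (intro mod_less_divisor) linarith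
      then have m1: "cs'!i \<in> set cs'" and m2: "cs'!((i+1) mod length cs') \<in> set cs'"
        using i by simp_all
      have "cs'!i \<noteq> a0" "cs'!((i+1) mod length cs') \<noteq> a0"
        using False m1 m2 by auto
      moreover have "cs'!i \<notin> set cs" "cs'!((i+1) mod length cs') \<notin> set cs"
        using scs' m1 m2 False unfolding V'_def S_def by auto
      ultimately show "joins ends (fs'!i) (cs'!i) (cs'!((i+1) mod length cs'))"
        using j unfolding joins_def ends'_def f_def by (cases "ends (fs'!i)") (auto split: if_splits)
    qed
    then have g1: "g \<le> length cs'" using gmin lg by fastforce
    have "set cs' \<subseteq> V - S" using scs' False unfolding V'_def by auto
    then have "length cs' \<le> n - g"
      using card_mono[of "V - S" "set cs'"] distinct_card[OF dcs'] cVS fV by simp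
    then show ?thesis using g1 gn by linarith
  next
    case True
    then obtain r where r: "r < length cs'" "cs' ! r = a0" by (auto simp: in_set_conv_nth)
    have C2: "is_cycle V' E' ends' (rotate r cs') (rotate r fs')" using cycle_rotate[OF C'] .
    have r0: "rotate r cs' ! 0 = a0" using r nth_rotate[of 0 cs' r] by (cases cs') auto
    have fd: "\<And>z. f z = (if z \<in> set cs then a0 else z)" by (simp add: f_def)
    have ed: "\<And>e. ends' e = (f (fst (ends e)), f (snd (ends e)))" by (simp add: ends'_def)
    have Vs: "V' \<subseteq> insert a0 V" unfolding V'_def by auto
    have "length cs \<le> 2 * length (rotate r cs')"
      by (rule caseB[OF C gmin a0S fd ed C2[unfolded E'_def] Vs r0])
    then have "g \<le> 2 * length cs'" using lg by simp
    then show ?thesis using kle gn by linarith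
  qed
  have "real (length cs) \<le> 2 * real (card V) / 3 + 1"
    using key lg n_def by simp
  then show ?thesis using C by blast
qed

end
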